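(* If $(T,\mu,\mathcal{A})\in\mathcal{T}$ is $\alpha$-mixing, then $T$ is exact with respect to $\mu$, i.e. $\bigcap_{n\ge0}T^{-n}\mathcal{B}=\{\emptyset,X\}$ modulo $\mu$ (and hence $T$ has positive entropy).
   Context: Let $X=[0,1]$, $\mathcal{B}$ its Borel $\sigma$-algebra, $\lambda$ Lebesgue measure. A partition of $[0,1]$ is a finite or countable family of intervals with nonempty pairwise disjoint interiors whose union is $[0,1]$ up to a $\lambda$-null set. The class $\mathcal{T}$ consists of triples $(T,\mu,\mathcal{A})$ where $\mu$ is a Borel probability measure on $[0,1]$ with $\frac1c\mu(A)\le\lambda(A)\le c\mu(A)$ for all $A\in\mathcal{B}$ for some $c\ge1$, $T:[0,1]\to[0,1]$ is measurable, $\mu$-preserving and ergodic, and $\mathcal{A}$ is a partition of $[0,1]$ such that: $T|_{\mathrm{int}(I)}$ is continuous and strictly monotone for each $I\in\mathcal{A}$; $\bigvee_{j\ge0}T^{-j}\sigma(\mathcal{A})=\mathcal{B}$ mod $\lambda$; and $H(\mathcal{A})=-\sum_{I\in\mathcal{A}}\mu(I)\log\mu(I)<\infty$. Write $\mathcal{A}^l=\bigvee_{j=0}^{l-1}T^{-j}\mathcal{A}$. $(T,\mu,\mathcal{A})\in\mathcal{T}$ is $\alpha$-mixing if there are nonnegative reals $\alpha(n)\to0$ such that for every $l\in\mathbb{N}$, every integer $n\ge0$, every $A\in\sigma(\mathcal{A}^l)$ and every $B\in\mathcal{B}$: $|\mu(A\cap T^{-(n+l)}B)-\mu(A)\mu(B)|\le\alpha(n)$.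 *)

theory Defs
  imports "HOL-Probability.Probability"
begin

definition unit_borel :: "real measure" where
  "unit_borel = restrict_space borel {0..1}"

definition is_interval_partition :: "real set set \<Rightarrow> bool" where
  "is_interval_partition P \<longleftrightarrow>
     countable P \<and>
     (\<forall>I\<in>P. is_interval I \<and> I \<subseteq> {0..1} \<and> interior I \<noteq> {}) \<and>
     (\<forall>I\<in>P. \<forall>J\<in>P. I \<noteq> J \<longrightarrow> interior I \<inter> interior J = {}) \<and>
     {0..1} - \<Union>P \<in> null_sets lborel"

definition preim :: "(real \<Rightarrow> real) \<Rightarrow> nat \<Rightarrow> real set \<Rightarrow> real set" where
  "preim T j S = {0..1} \<inter> (T ^^ j) -` S"

definition preim_sigma :: "(real \<Rightarrow> real) \<Rightarrow> real set set \<Rightarrow> nat \<Rightarrow> real set set" where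
  "preim_sigma T P j = preim T j ` sigma_sets {0..1} P"

definition refine :: "(real \<Rightarrow> real) \<Rightarrow> real set set \<Rightarrow> nat \<Rightarrow> real set set" where
  "refine T P l = {{0..1} \<inter> (\<Inter>j<l. (T ^^ j) -` (I j)) | I. \<forall>j<l. I j \<in> P}"

definition in_class_T :: "(real \<Rightarrow> real) \<Rightarrow> real measure \<Rightarrow> real set set \<Rightarrow> bool" where
  "in_class_T T \<mu> P \<longleftrightarrow>
     \<comment> \<open>mu is a Borel probability measure on [0,1], equivalent to Lebesgue measure\<close>
     prob_space \<mu> \<and> sets \<mu> = sets unit_borel \<and> space \<mu> = {0..1} \<and>
     (\<exists>c::real. c \<ge> 1 \<and> (\<forall>A\<in>sets unit_borel.
         measure \<mu> A / c \<le> measure lborel A \<and> measure lborel A \<le> c * measure \<mu> A)) \<and>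
     \<comment> \<open>T measurable, mu-preserving and ergodic\<close>
     T \<in> measurable \<mu> \<mu> \<and>
     (\<forall>A\<in>sets \<mu>. measure \<mu> (preim T 1 A) = measure \<mu> A) \<and>
     (\<forall>A\<in>sets \<mu>. preim T 1 A = A \<longrightarrow> measure \<mu> A = 0 \<or> measure \<mu> A = 1) \<and>
     \<comment> \<open>the partition\<close>
     is_interval_partition P \<and>
     (\<forall>I\<in>P. continuous_on (interior I) T \<and>
        (strict_mono_on (interior I) T \<or> strict_antimono_on (interior I) T)) \<and>
     \<comment> \<open>generating: join of T^{-j} sigma(A) equals the Borel sets mod lambda\<close>
     (\<forall>B\<in>sets unit_borel. \<exists>C\<in>sigma_sets {0..1} (\<Union>j. preim_sigma T P j).
         (B - C) \<union> (C - B) \<in> null_sets lborel) \<and>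
     \<comment> \<open>finite entropy (terms are nonnegative, 0 log 0 = 0)\<close>
     (\<lambda>I. - measure \<mu> I * ln (measure \<mu> I)) summable_on P"

definition alpha_mixing :: "(real \<Rightarrow> real) \<Rightarrow> real measure \<Rightarrow> real set set \<Rightarrow> bool" where
  "alpha_mixing T \<mu> P \<longleftrightarrow> in_class_T T \<mu> P \<and>
     (\<exists>\<alpha>::nat \<Rightarrow> real. (\<forall>n. \<alpha> n \<ge> 0) \<and> \<alpha> \<longlonglongrightarrow> 0 \<and>
        (\<forall>l::nat. l \<ge> 1 \<longrightarrow> (\<forall>n::nat. \<forall>A\<in>sigma_sets {0..1} (refine T P l). \<forall>B\<in>sets \<mu>.
           \<bar>measure \<mu> (A \<inter> preim T (n + l) B) - measure \<mu> A * measure \<mu> B\<bar> \<le> \<alpha> n)))"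

definition exact :: "(real \<Rightarrow> real) \<Rightarrow> real measure \<Rightarrow> bool" where
  "exact T \<mu> \<longleftrightarrow>
     (\<forall>C. (\<forall>n. C \<in> preim T n ` sets \<mu>) \<longrightarrow> measure \<mu> C = 0 \<or> measure \<mu> C = 1)"

definition finite_meas_partition :: "real measure \<Rightarrow> real set set \<Rightarrow> bool" where
  "finite_meas_partition \<mu> Q \<longleftrightarrow> finite Q \<and> Q \<subseteq> sets \<mu> \<and> disjoint Q \<and> \<Union>Q = space \<mu>"

definition part_entropy :: "real measure \<Rightarrow> real set set \<Rightarrow> real" where
  "part_entropy \<mu> Q = (\<Sum>q\<in>Q. - measure \<mu> q * ln (measure \<mu> q))"

definition join_partition :: "real measure \<Rightarrow> (real \<Rightarrow> real) \<Rightarrow> real set set \<Rightarrow> nat \<Rightarrow> real set set" where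
  "join_partition \<mu> T Q n =
     {space \<mu> \<inter> (\<Inter>j<n. (T ^^ j) -` (q j)) | q. \<forall>j<n. q j \<in> Q} - {{}}"

definition entropy_wrt :: "real measure \<Rightarrow> (real \<Rightarrow> real) \<Rightarrow> real set set \<Rightarrow> real" where
  "entropy_wrt \<mu> T Q = lim (\<lambda>n. part_entropy \<mu> (join_partition \<mu> T Q (Suc n)) / real (Suc n))"

definition ks_entropy :: "real measure \<Rightarrow> (real \<Rightarrow> real) \<Rightarrow> ereal" where
  "ks_entropy \<mu> T = (SUP Q\<in>{Q. finite_meas_partition \<mu> Q}. ereal (entropy_wrt \<mu> T Q))"

end

theory Submission
  imports Defs
begin


locale tsys =
  fixes T :: "real \<Rightarrow> real" and \<mu> :: "real measure" and P :: "real set set"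
  assumes cls: "in_class_T T \<mu> P"
begin

abbreviation "S \<equiv> {0..1::real}"

lemma prob: "prob_space \<mu>" using cls unfolding in_class_T_def by auto
sublocale M: prob_space \<mu> by (rule prob)
lemma sp: "space \<mu> = S" using cls unfolding in_class_T_def by auto
lemma sets_eq: "sets \<mu> = sets unit_borel" using cls unfolding in_class_T_def by auto
lemma Tmeas: "T \<in> measurable \<mu> \<mu>" using cls unfolding in_class_T_def by auto
lemma inv1: "A \<in> sets \<mu> \<Longrightarrow> measure \<mu> (preim T 1 A) = measure \<mu> A"
  using cls unfolding in_class_T_def by auto
lemma partP: "is_interval_partition P" using cls unfolding in_class_T_def by auto

lemma sets_mu_iff: "A \<in> sets \<mu> \<longleftrightarrow> A \<subseteq> S \<and> A \<in> sets borel"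
  unfolding sets_eq unit_borel_def by (subst sets_restrict_space_iff) auto

lemma TS: "x \<in> S \<Longrightarrow> T x \<in> S"
  using measurable_space[OF Tmeas] sp by auto

lemma TnS: "x \<in> S \<Longrightarrow> (T^^n) x \<in> S"
proof (induction n)
  case (Suc n) thus ?case using TS[of "(T^^n) x"] by simp
qed simp

lemma preim_sets: "A \<in> sets \<mu> \<Longrightarrow> preim T n A \<in> sets \<mu>"
proof -
  assume A: "A \<in> sets \<mu>"
  have "(T^^n) \<in> measurable \<mu> \<mu>" by (rule measurable_compose_n[OF Tmeas])
  hence "(T^^n) -` A \<inter> space \<mu> \<in> sets \<mu>" using A by (rule measurable_sets)
  thus ?thesis unfolding preim_def sp by (simp add: Int_commute)
qed

lemma preim_Suc: "preim T (Suc n) A = preim T 1 (preim T n A)"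
  using TS by (auto simp: preim_def funpow_swap1)

lemma preim_add: "preim T (m + n) A = preim T m (preim T n A)"
proof (induction m)
  case 0 thus ?case by (auto simp: preim_def)
next
  case (Suc m)
  have "preim T (Suc m + n) A = preim T (Suc (m + n)) A" by simp
  also have "\<dots> = preim T 1 (preim T (m + n) A)" by (rule preim_Suc)
  also have "\<dots> = preim T 1 (preim T m (preim T n A))" using Suc by simp
  also have "\<dots> = preim T (Suc m) (preim T n A)" by (rule preim_Suc[symmetric])
  finally show ?case .
qed

lemma inv: "A \<in> sets \<mu> \<Longrightarrow> measure \<mu> (preim T n A) = measure \<mu> A"
proof (induction n)
  case 0 thus ?case using sets_mu_iff by (auto simp: preim_def Int_absorb1)
next
  case (Suc n)
  have "measure \<mu> (preim T (Suc n) A) = measure \<mu> (preim T 1 (preim T n A))" by (subst preim_Suc) (rule refl)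
  also have "\<dots> = measure \<mu> (preim T n A)" using Suc by (intro inv1 preim_sets)
  finally show ?case using Suc by simp
qed

lemma preim_0: "A \<subseteq> S \<Longrightarrow> preim T 0 A = A" by (auto simp: preim_def)
lemma preim_sub: "preim T n A \<subseteq> S" by (auto simp: preim_def)
lemma preim_Int: "preim T n (A \<inter> B) = preim T n A \<inter> preim T n B" by (auto simp: preim_def)
lemma preim_Diff: "preim T n (A - B) = preim T n A - preim T n B" by (auto simp: preim_def)
lemma preim_S: "preim T n S = S" using TnS by (auto simp: preim_def)
lemma preim_Union: "preim T n (\<Union>i. A i) = (\<Union>i. preim T n (A i))" by (auto simp: preim_def)
lemma preim_UN: "preim T n (\<Union>X) = (\<Union>x\<in>X. preim T n x)" by (auto simp: preim_def)

lemma lebnull_imp: "A \<in> sets \<mu> \<Longrightarrow> A \<in> null_sets lborel \<Longrightarrow> measure \<mu> A = 0"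
proof -
  assume A: "A \<in> sets \<mu>" and N: "A \<in> null_sets lborel"
  obtain c :: real where c: "c \<ge> 1" "\<forall>A\<in>sets unit_borel. measure \<mu> A / c \<le> measure lborel A"
    using cls unfolding in_class_T_def by auto
  have l0: "measure lborel A = 0" using N by (simp add: measure_def null_setsD1)
  have "measure \<mu> A / c \<le> measure lborel A" using c(2) A sets_eq by blast
  hence "measure \<mu> A / c \<le> 0" using l0 by simp
  hence "measure \<mu> A \<le> 0" using c by (simp add: divide_le_0_iff)
  moreover have "measure \<mu> A \<ge> 0" by simp
  ultimately show ?thesis by simp
qed

lemma P_sets: "I \<in> P \<Longrightarrow> I \<in> sets \<mu>"
  using partP unfolding is_interval_partition_def sets_mu_iff
  by (auto intro: real_interval_borel_measurable)

lemma P_count: "countable P" using partP unfolding is_interval_partition_def by auto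

lemma gap_sets: "S - \<Union>P \<in> sets \<mu>"
proof -
  have "\<Union>P \<in> sets \<mu>" using P_count P_sets by (intro sets.countable_Union) auto
  thus ?thesis using sets.compl_sets sp by metis
qed

lemma gap_null: "measure \<mu> (S - \<Union>P) = 0"
  using gap_sets partP unfolding is_interval_partition_def by (intro lebnull_imp) auto

lemma gap_null_n: "measure \<mu> (preim T n (S - \<Union>P)) = 0"
  using inv gap_sets gap_null by simp

end


context tsys begin

definition F :: "nat \<Rightarrow> real set set" where "F l = sigma_sets S (refine T P l)"

definition ae :: "real set \<Rightarrow> real set \<Rightarrow> bool" where
  "ae A B \<longleftrightarrow> A \<in> sets \<mu> \<and> B \<in> sets \<mu> \<and> (A - B) \<union> (B - A) \<in> null_sets \<mu>"

lemma nullI: "A \<in> sets \<mu> \<Longrightarrow> measure \<mu> A = 0 \<Longrightarrow> A \<in> null_sets \<mu>"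
  by (simp add: M.emeasure_eq_measure null_setsI)

lemma null_measure: "A \<in> null_sets \<mu> \<Longrightarrow> measure \<mu> A = 0"
  by (simp add: measure_def null_setsD1)

lemma atom_eq: "S \<inter> (\<Inter>j<l. (T^^j) -` (I j)) = S \<inter> (\<Inter>j<l. preim T j (I j))"
  by (auto simp: preim_def)

lemma atom_sets: "(\<forall>j<l. I j \<in> P) \<Longrightarrow> S \<inter> (\<Inter>j<l. (T^^j) -` (I j)) \<in> sets \<mu>"
proof -
  assume I: "\<forall>j<l. I j \<in> P"
  have S: "S \<in> sets \<mu>" using sp sets.top[of \<mu>] by metis
  show ?thesis
  proof (cases "l = 0")
    case True thus ?thesis using S by simp
  next
    case False
    have "(\<Inter>j<l. preim T j (I j)) \<in> sets \<mu>"
      using False I by (intro sets.finite_INT) (auto intro: preim_sets P_sets)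
    thus ?thesis unfolding atom_eq using S by (intro sets.Int)
  qed
qed

lemma refine_sets: "refine T P l \<subseteq> sets \<mu>"
  unfolding refine_def using atom_sets by blast

lemma F_sets: "F l \<subseteq> sets \<mu>"
  unfolding F_def using sets.sigma_sets_subset[OF refine_sets] sp by simp

lemma ae_refl: "A \<in> sets \<mu> \<Longrightarrow> ae A A" by (simp add: ae_def)
lemma ae_sym: "ae A B \<Longrightarrow> ae B A" by (simp add: ae_def Un_commute)
lemma ae_trans: "ae A B \<Longrightarrow> ae B C \<Longrightarrow> ae A C"
proof -
  assume 1: "ae A B" and 2: "ae B C"
  have "(A - C) \<union> (C - A) \<subseteq> ((A - B) \<union> (B - A)) \<union> ((B - C) \<union> (C - B))" by blast
  moreover have "((A - B) \<union> (B - A)) \<union> ((B - C) \<union> (C - B)) \<in> null_sets \<mu>"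
    using 1 2 unfolding ae_def by auto
  moreover have "(A - C) \<union> (C - A) \<in> sets \<mu>" using 1 2 unfolding ae_def by auto
  ultimately show ?thesis using 1 2 unfolding ae_def by (blast intro: null_sets_subset)
qed

lemma ae_compl: "ae A B \<Longrightarrow> ae (S - A) (S - B)"
proof -
  assume 1: "ae A B"
  have "(S - A - (S - B)) \<union> (S - B - (S - A)) \<subseteq> (A - B) \<union> (B - A)" by blast
  moreover have "S - A \<in> sets \<mu>" "S - B \<in> sets \<mu>" using 1 sp unfolding ae_def by (metis sets.compl_sets)+
  ultimately show ?thesis using 1 unfolding ae_def by (blast intro: null_sets_subset)
qed

lemma ae_Int: "ae A B \<Longrightarrow> ae C D \<Longrightarrow> ae (A \<inter> C) (B \<inter> D)"
proof -
  assume 1: "ae A B" and 2: "ae C D"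
  have "(A \<inter> C - B \<inter> D) \<union> (B \<inter> D - A \<inter> C) \<subseteq> ((A - B) \<union> (B - A)) \<union> ((C - D) \<union> (D - C))" by blast
  moreover have "((A - B) \<union> (B - A)) \<union> ((C - D) \<union> (D - C)) \<in> null_sets \<mu>"
    using 1 2 unfolding ae_def by auto
  ultimately show ?thesis using 1 2 unfolding ae_def by (blast intro: null_sets_subset)
qed

lemma ae_UN: "(\<And>i::nat. ae (A i) (B i)) \<Longrightarrow> ae (\<Union>i. A i) (\<Union>i. B i)"
proof -
  assume 1: "\<And>i. ae (A i) (B i)"
  have "((\<Union>i. A i) - (\<Union>i. B i)) \<union> ((\<Union>i. B i) - (\<Union>i. A i)) \<subseteq> (\<Union>i. (A i - B i) \<union> (B i - A i))" by blast
  moreover have "(\<Union>i. (A i - B i) \<union> (B i - A i)) \<in> null_sets \<mu>" using 1 unfolding ae_def by auto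
  moreover have "(\<Union>i. A i) \<in> sets \<mu>" "(\<Union>i. B i) \<in> sets \<mu>" using 1 unfolding ae_def by auto
  ultimately show ?thesis unfolding ae_def by (blast intro: null_sets_subset)
qed

lemma ae_measure: "ae A B \<Longrightarrow> measure \<mu> A = measure \<mu> B"
proof -
  assume 1: "ae A B"
  let ?N = "(A - B) \<union> (B - A)"
  have "measure \<mu> A = measure \<mu> (A - ?N)" using 1 unfolding ae_def by (simp add: measure_Diff_null_set)
  also have "A - ?N = B - ?N" by blast
  also have "measure \<mu> (B - ?N) = measure \<mu> B" using 1 unfolding ae_def by (simp add: measure_Diff_null_set)
  finally show ?thesis .
qed

lemma ae_subset_null: "A \<in> sets \<mu> \<Longrightarrow> B \<in> sets \<mu> \<Longrightarrow> B \<subseteq> A \<Longrightarrow> A - B \<subseteq> N \<Longrightarrow> N \<in> null_sets \<mu> \<Longrightarrow> ae A B"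
  unfolding ae_def by (auto intro: null_sets_subset)

lemma preim_null: "N \<in> null_sets \<mu> \<Longrightarrow> preim T n N \<in> null_sets \<mu>"
proof -
  assume N: "N \<in> null_sets \<mu>"
  hence Ns: "N \<in> sets \<mu>" by auto
  show ?thesis using inv[OF Ns, of n] null_measure[OF N] by (intro nullI preim_sets Ns) simp
qed

lemma ae_preim: "ae A B \<Longrightarrow> ae (preim T n A) (preim T n B)"
proof -
  assume 1: "ae A B"
  have "(preim T n A - preim T n B) \<union> (preim T n B - preim T n A) = preim T n ((A - B) \<union> (B - A))"
    by (auto simp: preim_def)
  thus ?thesis using 1 unfolding ae_def by (auto intro: preim_sets preim_null)
qed

lemma gap_null_set: "preim T n (S - \<Union>P) \<in> null_sets \<mu>"
  by (intro nullI preim_sets gap_sets gap_null_n)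

lemma atom_lift: 
  assumes I: "\<forall>j<l. I j \<in> P"
  shows "\<exists>A'\<in>F (Suc l). ae (S \<inter> (\<Inter>j<l. (T^^j) -` (I j))) A'"
proof -
  let ?a = "S \<inter> (\<Inter>j<l. (T^^j) -` (I j))"
  let ?b = "\<lambda>J. S \<inter> (\<Inter>j<Suc l. (T^^j) -` ((I(l:=J)) j))"
  let ?A = "\<Union>J\<in>P. ?b J"
  have b_ref: "?b J \<in> refine T P (Suc l)" if "J \<in> P" for J
    unfolding refine_def using I that by (auto intro!: exI[of _ "I(l:=J)"])
  have AF: "?A \<in> F (Suc l)" unfolding F_def
    using P_count b_ref by (intro sigma_sets_UNION) auto
  have sub: "?A \<subseteq> ?a" by (auto simp: lessThan_Suc)
  have diff: "?a - ?A \<subseteq> preim T l (S - \<Union>P)"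
  proof
    fix x assume x: "x \<in> ?a - ?A"
    hence xS: "x \<in> S" by auto
    have "(T^^l) x \<notin> \<Union>P"
    proof
      assume "(T^^l) x \<in> \<Union>P"
      then obtain J where J: "J \<in> P" "(T^^l) x \<in> J" by auto
      have "x \<in> ?b J" using x J by (auto simp: lessThan_Suc)
      thus False using x J by auto
    qed
    thus "x \<in> preim T l (S - \<Union>P)" using xS TnS by (auto simp: preim_def)
  qed
  have "ae ?a ?A"
    using atom_sets[OF I] AF F_sets sub diff gap_null_set by (intro ae_subset_null) auto
  thus ?thesis using AF by blast
qed

lemma atom_lift_preim:
  assumes I: "\<forall>j<l. I j \<in> P"
  shows "\<exists>A'\<in>F (Suc l). ae (preim T 1 (S \<inter> (\<Inter>j<l. (T^^j) -` (I j)))) A'"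
proof -
  let ?a = "preim T 1 (S \<inter> (\<Inter>j<l. (T^^j) -` (I j)))"
  let ?b = "\<lambda>J. S \<inter> (\<Inter>j<Suc l. (T^^j) -` ((case_nat J I) j))"
  let ?A = "\<Union>J\<in>P. ?b J"
  have b_ref: "?b J \<in> refine T P (Suc l)" if "J \<in> P" for J
    unfolding refine_def using I that
    by (auto intro!: exI[of _ "case_nat J I"] split: nat.splits)
  have AF: "?A \<in> F (Suc l)" unfolding F_def
    using P_count b_ref by (intro sigma_sets_UNION) auto
  have mem_a: "x \<in> ?a \<longleftrightarrow> x \<in> S \<and> (\<forall>j<l. (T^^Suc j) x \<in> I j)" for x
    using TS by (auto simp: preim_def funpow_swap1)
  have mem_b: "x \<in> ?b J \<longleftrightarrow> x \<in> S \<and> x \<in> J \<and> (\<forall>j<l. (T^^Suc j) x \<in> I j)" for x J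
  proof -
    have "(\<forall>j<Suc l. (T^^j) x \<in> case_nat J I j) \<longleftrightarrow> x \<in> J \<and> (\<forall>j<l. (T^^Suc j) x \<in> I j)"
      by (auto simp: less_Suc_eq_0_disj split: nat.splits)
    thus ?thesis by auto
  qed
  have sub: "?A \<subseteq> ?a"
  proof
    fix x assume "x \<in> ?A"
    then obtain J where J: "J \<in> P" "x \<in> ?b J" by blast
    hence "x \<in> S \<and> (\<forall>j<l. (T^^Suc j) x \<in> I j)" using mem_b[of x J] by blast
    thus "x \<in> ?a" using mem_a[of x] by blast
  qed
  have diff: "?a - ?A \<subseteq> preim T 0 (S - \<Union>P)"
  proof
    fix x assume x: "x \<in> ?a - ?A"
    hence 1: "x \<in> S \<and> (\<forall>j<l. (T^^Suc j) x \<in> I j)" using mem_a[of x] by blast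
    have "x \<notin> \<Union>P"
    proof
      assume "x \<in> \<Union>P"
      then obtain J where J: "J \<in> P" "x \<in> J" by blast
      hence "x \<in> ?b J" using 1 mem_b[of x J] by blast
      thus False using x J by blast
    qed
    thus "x \<in> preim T 0 (S - \<Union>P)" using 1 by (auto simp: preim_def)
  qed
  have asets: "?a \<in> sets \<mu>" using atom_sets[OF I] by (rule preim_sets)
  have "ae ?a ?A"
    using asets AF F_sets sub diff gap_null_set by (intro ae_subset_null) auto
  thus ?thesis using AF by blast
qed

end


context tsys begin

lemma refine_Pow: "refine T P l \<subseteq> Pow S" unfolding refine_def by auto

lemma F_sub: "A \<in> F l \<Longrightarrow> A \<subseteq> S"
  unfolding F_def using sigma_sets_into_sp[OF refine_Pow] by blast

lemma F_Int: "a \<in> F l \<Longrightarrow> b \<in> F l \<Longrightarrow> a \<inter> b \<in> F l"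
proof -
  assume a: "a \<in> F l" and b: "b \<in> F l"
  have "a \<inter> b = S - ((S - a) \<union> (S - b))" using F_sub[OF a] F_sub[OF b] by blast
  thus ?thesis using a b unfolding F_def by (metis sigma_sets.Compl sigma_sets_Un)
qed

lemma lift1: "A \<in> F l \<Longrightarrow> \<exists>A'\<in>F (Suc l). ae A A'"
  unfolding F_def
proof (induction rule: sigma_sets.induct)
  case (Basic a)
  then obtain I where "\<forall>j<l. I j \<in> P" "a = S \<inter> (\<Inter>j<l. (T^^j) -` (I j))" unfolding refine_def by blast
  thus ?case using atom_lift unfolding F_def by blast
next
  case Empty thus ?case by (intro bexI[of _ "{}"]) (auto intro: ae_refl sigma_sets.Empty)
next
  case (Compl a)
  then obtain A' where "A' \<in> sigma_sets S (refine T P (Suc l))" "ae a A'" by blast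
  thus ?case by (intro bexI[of _ "S - A'"]) (auto intro: ae_compl sigma_sets.Compl)
next
  case (Union a)
  then obtain f where f: "\<And>i. f i \<in> sigma_sets S (refine T P (Suc l)) \<and> ae (a i) (f i)" by metis
  thus ?case by (intro bexI[of _ "\<Union>i. f i"]) (auto intro: ae_UN sigma_sets.Union)
qed

lemma lift_preim: "A \<in> F l \<Longrightarrow> \<exists>A'\<in>F (Suc l). ae (preim T 1 A) A'"
  unfolding F_def
proof (induction rule: sigma_sets.induct)
  case (Basic a)
  then obtain I where "\<forall>j<l. I j \<in> P" "a = S \<inter> (\<Inter>j<l. (T^^j) -` (I j))" unfolding refine_def by blast
  thus ?case using atom_lift_preim unfolding F_def by blast
next
  case Empty thus ?case by (intro bexI[of _ "{}"]) (auto simp: preim_def intro: ae_refl sigma_sets.Empty)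
next
  case (Compl a)
  then obtain A' where "A' \<in> sigma_sets S (refine T P (Suc l))" "ae (preim T 1 a) A'" by blast
  moreover have "preim T 1 (S - a) = S - preim T 1 a" by (simp add: preim_Diff preim_S)
  ultimately show ?case by (intro bexI[of _ "S - A'"]) (auto intro: ae_compl sigma_sets.Compl)
next
  case (Union a)
  then obtain f where f: "\<And>i. f i \<in> sigma_sets S (refine T P (Suc l)) \<and> ae (preim T 1 (a i)) (f i)" by metis
  thus ?case by (intro bexI[of _ "\<Union>i. f i"]) (auto simp: preim_Union intro: ae_UN sigma_sets.Union)
qed

lemma lift_le: assumes A0: "A \<in> F l" and ll: "l \<le> l'" shows "\<exists>A'\<in>F l'. ae A A'"
  using ll
proof (induction l' rule: dec_induct)
  case base thus ?case using F_sets A0 by (auto intro: ae_refl)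
next
  case (step m)
  then obtain A' where "A' \<in> F m" "ae A A'" by blast
  with lift1 obtain A'' where "A'' \<in> F (Suc m)" "ae A' A''" by blast
  thus ?case using ae_trans[OF \<open>ae A A'\<close>] by blast
qed

definition G :: "real set set" where "G = {A. \<exists>l\<ge>1. \<exists>A'\<in>F l. ae A A'}"

lemma G_sets: "G \<subseteq> sets \<mu>" unfolding G_def ae_def by auto

lemma G_Pow: "G \<subseteq> Pow S" using G_sets sets.sets_into_space sp by blast

lemma G_Int: "Int_stable G"
  unfolding Int_stable_def
proof (intro ballI)
  fix a b assume a: "a \<in> G" and b: "b \<in> G"
  then obtain l1 l2 a' b' where 1: "l1 \<ge> 1" "a' \<in> F l1" "ae a a'" and 2: "l2 \<ge> 1" "b' \<in> F l2" "ae b b'"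
    unfolding G_def by blast
  obtain a'' where a'': "a'' \<in> F (max l1 l2)" "ae a' a''" using lift_le[OF 1(2), of "max l1 l2"] by auto
  obtain b'' where b'': "b'' \<in> F (max l1 l2)" "ae b' b''" using lift_le[OF 2(2), of "max l1 l2"] by auto
  have "ae (a \<inter> b) (a'' \<inter> b'')" using ae_Int[OF ae_trans[OF 1(3) a''(2)] ae_trans[OF 2(3) b''(2)]] .
  moreover have "a'' \<inter> b'' \<in> F (max l1 l2)" using F_Int[OF a''(1) b''(1)] .
  moreover have "max l1 l2 \<ge> 1" using 1 by simp
  ultimately show "a \<inter> b \<in> G" unfolding G_def by blast
qed

lemma refine1: "refine T P 1 = P"
proof
  show "refine T P 1 \<subseteq> P"
  proof
    fix a assume "a \<in> refine T P 1"
    then obtain I where I: "I 0 \<in> P" "a = S \<inter> (\<Inter>j<1. (T^^j) -` (I j))" unfolding refine_def by auto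
    have "a = S \<inter> I 0" using I(2) by auto
    also have "\<dots> = I 0" using sets_mu_iff[of "I 0"] P_sets[OF I(1)] by auto
    finally show "a \<in> P" using I by simp
  qed
next
  show "P \<subseteq> refine T P 1"
  proof
    fix a assume a: "a \<in> P"
    have "a \<subseteq> S" using sets_mu_iff[of a] P_sets[OF a] by auto
    hence "a = S \<inter> (\<Inter>j<1. (T^^j) -` ((\<lambda>_. a) j))" by auto
    thus "a \<in> refine T P 1" unfolding refine_def using a by (intro CollectI exI[of _ "\<lambda>_. a"]) simp
  qed
qed

lemma F1: "F 1 = sigma_sets S P" unfolding F_def refine1 ..

lemma preim_G': "A \<in> sigma_sets S P \<Longrightarrow> \<exists>A'\<in>F (Suc j). ae (preim T j A) A'"
proof (induction j)
  case 0
  have A0: "A \<in> F 1" unfolding F1 by (rule 0)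
  have A1: "A \<in> F (Suc 0)" using A0 by (simp only: One_nat_def)
  hence "A \<subseteq> S" by (rule F_sub)
  hence "preim T 0 A = A" by (rule preim_0)
  moreover have "ae A A" using A1 F_sets by (intro ae_refl) blast
  ultimately show ?case using A1 by auto
next
  case (Suc j)
  then obtain A' where A': "A' \<in> F (Suc j)" "ae (preim T j A) A'" using Suc.IH Suc.prems by blast
  obtain A'' where A'': "A'' \<in> F (Suc (Suc j))" "ae (preim T 1 A') A''" using lift_preim[OF A'(1)] by blast
  have "ae (preim T (Suc j) A) (preim T 1 A')" unfolding preim_Suc[of j] using A'(2) by (rule ae_preim)
  thus ?case using ae_trans[OF _ A''(2)] A''(1) by blast
qed

lemma preim_G: "A \<in> sigma_sets S P \<Longrightarrow> preim T j A \<in> G"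
  using preim_G'[of A j] unfolding G_def by auto

lemma indep01:
  assumes C: "C \<in> sets \<mu>"
    and H: "\<And>l A. l \<ge> 1 \<Longrightarrow> A \<in> F l \<Longrightarrow> measure \<mu> (A \<inter> C) = measure \<mu> A * measure \<mu> C"
  shows "measure \<mu> C = 0 \<or> measure \<mu> C = 1"
proof -
  define D where "D = {A \<in> sets \<mu>. measure \<mu> (A \<inter> C) = measure \<mu> A * measure \<mu> C}"
  have GD: "A \<in> D" if "A \<in> G" for A
  proof -
    obtain l A' where l: "l \<ge> 1" "A' \<in> F l" "ae A A'" using \<open>A \<in> G\<close> unfolding G_def by blast
    have "ae (A \<inter> C) (A' \<inter> C)" using ae_Int[OF l(3) ae_refl[OF C]] .
    hence "measure \<mu> (A \<inter> C) = measure \<mu> (A' \<inter> C)" by (rule ae_measure)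
    also have "\<dots> = measure \<mu> A' * measure \<mu> C" using H l by blast
    also have "measure \<mu> A' = measure \<mu> A" using l ae_measure by auto
    finally show ?thesis unfolding D_def using l ae_def by auto
  qed
  have sigD: "A \<in> D" if "A \<in> sigma_sets S G" for A
    using G_Int G_Pow that
  proof (induction rule: sigma_sets_induct_disjoint)
    case (basic A) thus ?case by (rule GD)
  next
    case empty thus ?case unfolding D_def by simp
  next
    case (compl A)
    hence A: "A \<in> sets \<mu>" "measure \<mu> (A \<inter> C) = measure \<mu> A * measure \<mu> C" unfolding D_def by auto
    have "(S - A) \<inter> C = C - (A \<inter> C)" using C sets_mu_iff by blast
    hence "measure \<mu> ((S - A) \<inter> C) = measure \<mu> C - measure \<mu> (A \<inter> C)"
      using A C by (simp add: M.finite_measure_Diff sets.Int)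
    also have "\<dots> = (1 - measure \<mu> A) * measure \<mu> C" using A(2) by (simp add: left_diff_distrib)
    also have "1 - measure \<mu> A = measure \<mu> (S - A)"
      using M.prob_compl[OF A(1)] sp by simp
    finally have eq: "measure \<mu> ((S - A) \<inter> C) = measure \<mu> (S - A) * measure \<mu> C" .
    have "S - A \<in> sets \<mu>" using sets.compl_sets[OF A(1)] sp by simp
    thus ?case unfolding D_def using eq by blast
  next
    case (union A)
    have As: "range A \<subseteq> sets \<mu>" using union(3) unfolding D_def by blast
    have 1: "(\<lambda>i. measure \<mu> (A i)) sums measure \<mu> (\<Union>i. A i)"
      using As union(1) by (rule M.finite_measure_UNION)
    have 2: "(\<lambda>i. measure \<mu> (A i \<inter> C)) sums measure \<mu> (\<Union>i. A i \<inter> C)"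
    proof (rule M.finite_measure_UNION)
      show "range (\<lambda>i. A i \<inter> C) \<subseteq> sets \<mu>" using As C by blast
      show "disjoint_family (\<lambda>i. A i \<inter> C)" using union(1) unfolding disjoint_family_on_def by blast
    qed
    have 3: "(\<lambda>i. measure \<mu> (A i) * measure \<mu> C) sums (measure \<mu> (\<Union>i. A i) * measure \<mu> C)"
      using 1 by (rule sums_mult2)
    have e: "(\<lambda>i. measure \<mu> (A i \<inter> C)) = (\<lambda>i. measure \<mu> (A i) * measure \<mu> C)"
    proof
      fix i show "measure \<mu> (A i \<inter> C) = measure \<mu> (A i) * measure \<mu> C"
        using union(3)[of i] unfolding D_def by blast
    qed
    have m: "measure \<mu> (\<Union>i. A i \<inter> C) = measure \<mu> (\<Union>i. A i) * measure \<mu> C"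
      using sums_unique2[OF 2[unfolded e] 3] .
    have "(\<Union>i. A i) \<inter> C = (\<Union>i. A i \<inter> C)" by blast
    hence m2: "measure \<mu> ((\<Union>i. A i) \<inter> C) = measure \<mu> (\<Union>i. A i) * measure \<mu> C" using m by simp
    have "(\<Union>i. A i) \<in> sets \<mu>" by (rule sets.countable_UN[OF As])
    thus ?case unfolding D_def using m2 by blast
  qed
  have genr: "\<forall>B\<in>sets unit_borel. \<exists>C\<in>sigma_sets {0..1} (\<Union>j. preim_sigma T P j).
         (B - C) \<union> (C - B) \<in> null_sets lborel"
    using cls unfolding in_class_T_def by (elim conjE) assumption
  obtain C' where C': "C' \<in> sigma_sets S (\<Union>j. preim_sigma T P j)" "(C - C') \<union> (C' - C) \<in> null_sets lborel"
    using genr C sets_eq by blast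
  have "(\<Union>j. preim_sigma T P j) \<subseteq> sigma_sets S G"
    unfolding preim_sigma_def using preim_G by blast
  hence "C' \<in> sigma_sets S G" using C'(1) sigma_sets_mono by blast
  hence C'D: "C' \<in> D" by (rule sigD)
  hence C's: "C' \<in> sets \<mu>" unfolding D_def by auto
  have "(C - C') \<union> (C' - C) \<in> sets \<mu>" using C C's by auto
  hence "measure \<mu> ((C - C') \<union> (C' - C)) = 0" using C'(2) lebnull_imp by blast
  hence "ae C C'" unfolding ae_def using C C's by (auto intro: nullI)
  hence "ae (C' \<inter> C) (C \<inter> C)" using ae_Int[OF ae_sym ae_refl[OF C]] by blast
  hence "measure \<mu> (C \<inter> C) = measure \<mu> (C' \<inter> C)" using ae_measure by metis
  also have "\<dots> = measure \<mu> C' * measure \<mu> C" using C'D unfolding D_def by blast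
  finally have "measure \<mu> (C \<inter> C) = measure \<mu> C' * measure \<mu> C" .
  moreover have "measure \<mu> C' = measure \<mu> C" using \<open>ae C C'\<close> ae_measure by auto
  ultimately have "measure \<mu> C = measure \<mu> C * measure \<mu> C" by simp
  hence "measure \<mu> C * (measure \<mu> C - 1) = 0" by (simp add: right_diff_distrib)
  thus ?thesis by simp
qed

lemma exact_of_mix:
  assumes a0: "\<And>n. \<alpha> n \<ge> 0" and alim: "\<alpha> \<longlonglongrightarrow> 0"
    and mix: "\<And>l n A B. l \<ge> 1 \<Longrightarrow> A \<in> F l \<Longrightarrow> B \<in> sets \<mu> \<Longrightarrow>
       \<bar>measure \<mu> (A \<inter> preim T (n + l) B) - measure \<mu> A * measure \<mu> B\<bar> \<le> \<alpha> n"
  shows "exact T \<mu>"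
  unfolding exact_def
proof (intro allI impI)
  fix C assume tail: "\<forall>n. C \<in> preim T n ` sets \<mu>"
  obtain B0 where B0: "B0 \<in> sets \<mu>" "C = preim T 0 B0" using tail by blast
  have Cs: "C \<in> sets \<mu>" using B0 preim_sets by simp
  show "measure \<mu> C = 0 \<or> measure \<mu> C = 1"
  proof (rule indep01[OF Cs])
    fix l A assume l: "l \<ge> 1" and A: "A \<in> F l"
    have bd: "\<bar>measure \<mu> (A \<inter> C) - measure \<mu> A * measure \<mu> C\<bar> \<le> \<alpha> n" for n
    proof -
      obtain B where B: "B \<in> sets \<mu>" "C = preim T (n + l) B" using tail by blast
      have "measure \<mu> C = measure \<mu> B" using B inv by simp
      thus ?thesis using mix[OF l A B(1), of n] B by simp
    qed
    have "\<bar>measure \<mu> (A \<inter> C) - measure \<mu> A * measure \<mu> C\<bar> \<le> 0"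
      using LIMSEQ_le_const[OF alim, of "\<bar>measure \<mu> (A \<inter> C) - measure \<mu> A * measure \<mu> C\<bar>"] bd by blast
    thus "measure \<mu> (A \<inter> C) = measure \<mu> A * measure \<mu> C" by simp
  qed
qed

end


definition phi :: "real \<Rightarrow> real" where "phi x = - x * ln x"

lemma phi_0[simp]: "phi 0 = 0" by (simp add: phi_def)
lemma phi_1[simp]: "phi 1 = 0" by (simp add: phi_def)

lemma ln_le_minus1: "(y::real) > 0 \<Longrightarrow> ln y \<le> y - 1"
  by (rule ln_le_minus_one)

lemma phi_lower:
  assumes "0 \<le> x" "x \<le> m" "m \<le> s"
  shows "phi x \<ge> - x * ln s + x * (1 - m / s)"
proof (cases "x = 0")
  case True thus ?thesis by simp
next
  case False
  hence xp: "x > 0" using assms by simp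
  hence mp: "m > 0" and sp: "s > 0" using assms by auto
  have "ln x \<le> ln m" using xp assms by simp
  moreover have "ln (m / s) \<le> m / s - 1" using mp sp by (intro ln_le_minus1) simp
  hence "ln m - ln s \<le> m / s - 1" using mp sp by (simp add: ln_div)
  ultimately have "ln x \<le> ln s + (m / s - 1)" by simp
  hence "x * ln x \<le> x * (ln s + (m / s - 1))" using xp by (intro mult_left_mono) auto
  thus ?thesis unfolding phi_def by (simp add: algebra_simps)
qed

lemma phi_upper:
  assumes "0 \<le> x" "x \<le> a" "x \<le> b"
  shows "phi x \<le> - x * ln a - x * ln b + a * b - x"
proof (cases "x = 0")
  case True thus ?thesis using assms by simp
next
  case False
  hence xp: "x > 0" using assms by simp
  hence ap: "a > 0" and bp: "b > 0" using assms by auto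
  have "ln (a * b / x) \<le> a * b / x - 1" using ap bp xp by (intro ln_le_minus1) simp
  hence "ln a + ln b - ln x \<le> a * b / x - 1" using ap bp xp by (simp add: ln_div ln_mult)
  hence "x * (ln a + ln b - ln x) \<le> x * (a * b / x - 1)" using xp by (intro mult_left_mono) auto
  hence "x * (ln a + ln b - ln x) \<le> a * b - x" using xp by (simp add: algebra_simps)
  thus ?thesis unfolding phi_def by (simp add: algebra_simps)
qed

lemma subadd_mult:
  assumes sub: "\<And>m n. u (m + n) \<le> u m + (u n :: real)" and u0: "u 0 \<le> 0"
  shows "u (q * k) \<le> real q * u k"
proof (induction q)
  case 0 thus ?case using u0 by simp
next
  case (Suc q)
  have "u (Suc q * k) = u (k + q * k)" by simp
  also have "\<dots> \<le> u k + u (q * k)" by (rule sub)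
  also have "\<dots> \<le> u k + real q * u k" using Suc by simp
  finally show ?case by (simp add: algebra_simps)
qed

lemma subadd_lin:
  assumes sub: "\<And>m n. u (m + n) \<le> u m + (u n :: real)" and u0: "u 0 \<le> 0"
  shows "u r \<le> real r * u 1"
  using subadd_mult[OF sub u0, of r 1] by simp

lemma fekete:
  fixes u :: "nat \<Rightarrow> real"
  assumes sub: "\<And>m n. u (m + n) \<le> u m + u n" and nn: "\<And>n. u n \<ge> 0" and u0: "u 0 = 0"
  shows "convergent (\<lambda>n. u (Suc n) / real (Suc n))"
proof -
  define a where "a n = u (Suc n) / real (Suc n)" for n
  define L where "L = Inf (range a)"
  have bdd: "bdd_below (range a)" unfolding a_def using nn by (intro bdd_belowI[of _ 0]) auto
  have lower: "L \<le> a n" for n unfolding L_def using bdd by (intro cInf_lower) auto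
  have "a \<longlonglongrightarrow> L"
  proof (rule LIMSEQ_I)
    fix e :: real assume e: "e > 0"
    have "\<exists>x\<in>range a. x < L + e / 2"
      using cInf_lessD[of "range a" "L + e/2"] e unfolding L_def by auto
    hence "\<exists>k. a k < L + e / 2" by blast
    then obtain k0 where k0: "a k0 < L + e / 2" by blast
    define k where "k = Suc k0"
    have kpos: "k \<ge> 1" unfolding k_def by simp
    have uk: "u k / real k < L + e / 2" using k0 unfolding a_def k_def .
    obtain N :: nat where N: "real N > 2 * real k * u 1 / e" using reals_Archimedean2 by blast
    show "\<exists>N. \<forall>n\<ge>N. norm (a n - L) < e"
    proof (intro exI allI impI)
      fix n assume n: "n \<ge> N"
      define m where "m = Suc n"
      have mpos: "real m > 0" unfolding m_def by simp
      define q where "q = m div k"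
      define r where "r = m mod k"
      have mqr: "m = q * k + r" unfolding q_def r_def by simp
      have rk: "r < k" unfolding r_def using kpos by simp
      have "u m \<le> u (q * k) + u r" unfolding mqr by (rule sub)
      also have "\<dots> \<le> real q * u k + real r * u 1"
        using subadd_mult[OF sub, of q k] subadd_lin[OF sub, of r] u0 by simp
      also have "\<dots> \<le> real q * u k + real k * u 1"
        using rk nn[of 1] by (intro add_left_mono mult_right_mono) auto
      finally have um: "u m \<le> real q * u k + real k * u 1" .
      have "real q * real k \<le> real m" unfolding mqr by simp
      hence "real q * real k * u k \<le> real m * u k"
        using nn[of k] by (intro mult_right_mono) auto
      hence "real q * u k \<le> real m * (u k / real k)"
        using kpos by (simp add: field_simps)
      hence "u m \<le> real m * (u k / real k) + real k * u 1" using um by simp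
      hence "u m / real m \<le> u k / real k + real k * u 1 / real m"
        using mpos by (simp add: field_simps)
      moreover have "real k * u 1 / real m < e / 2"
      proof -
        have "real m > real N" using n unfolding m_def by simp
        hence "real m > 2 * real k * u 1 / e" using N by simp
        hence "real m * e > 2 * real k * u 1" using e by (simp add: field_simps)
        thus ?thesis using mpos e by (simp add: field_simps)
      qed
      ultimately have "u m / real m < L + e" using uk by linarith
      hence "a n < L + e" unfolding a_def m_def .
      moreover have "L \<le> a n" by (rule lower)
      ultimately show "norm (a n - L) < e" by simp
    qed
  qed
  thus ?thesis unfolding a_def convergent_def by blast
qed


locale esys = tsys +
  fixes q :: "real set"
  assumes q_sets: "q \<in> sets \<mu>"
begin

definition Qb :: "bool \<Rightarrow> real set" where "Qb b = (if b then q else S - q)"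
definition atom :: "bool list \<Rightarrow> real set" where
  "atom w = S \<inter> (\<Inter>j<length w. preim T j (Qb (w!j)))"
definition W :: "nat \<Rightarrow> bool list set" where "W n = {w. length w = n}"
definition Hn :: "nat \<Rightarrow> real" where "Hn n = (\<Sum>w\<in>W n. phi (measure \<mu> (atom w)))"

lemma q_sub: "q \<subseteq> S" using q_sets sets_mu_iff by blast
lemma Sq_sets: "S - q \<in> sets \<mu>" using sets.compl_sets[OF q_sets] sp by simp
lemma Qb_sets: "Qb b \<in> sets \<mu>" unfolding Qb_def using q_sets Sq_sets by simp
lemma Qb_sub: "Qb b \<subseteq> S" unfolding Qb_def using q_sub by auto
lemma Qb_disj: "b \<noteq> c \<Longrightarrow> Qb b \<inter> Qb c = {}" unfolding Qb_def by auto

lemma atom_mem: "x \<in> atom w \<longleftrightarrow> x \<in> S \<and> (\<forall>j<length w. (T^^j) x \<in> Qb (w!j))"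
  unfolding atom_def preim_def by auto

lemma atom_Nil: "atom [] = S" unfolding atom_def by simp

lemma atom_Cons: "atom (b # w) = Qb b \<inter> preim T 1 (atom w)"
proof (rule set_eqI)
  fix x
  have "x \<in> atom (b # w) \<longleftrightarrow> x \<in> S \<and> x \<in> Qb b \<and> (\<forall>j<length w. (T^^Suc j) x \<in> Qb (w!j))"
    unfolding atom_mem by (auto simp: less_Suc_eq_0_disj)
  also have "\<dots> \<longleftrightarrow> x \<in> Qb b \<inter> preim T 1 (atom w)"
    unfolding preim_def using Qb_sub TS by (auto simp: funpow_swap1 atom_mem)
  finally show "x \<in> atom (b # w) \<longleftrightarrow> x \<in> Qb b \<inter> preim T 1 (atom w)" .
qed

lemma atom_sets: "atom w \<in> sets \<mu>"
proof (induction w)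
  case Nil thus ?case using atom_Nil sets.top[of \<mu>] sp by simp
next
  case (Cons b w) thus ?case unfolding atom_Cons using Qb_sets preim_sets by (intro sets.Int) auto
qed

lemma atom_sub: "atom w \<subseteq> S" unfolding atom_def by auto

lemma atom_append: "atom (u @ w) = atom u \<inter> preim T (length u) (atom w)"
proof (induction u)
  case Nil thus ?case using atom_sub by (auto simp: atom_Nil preim_0)
next
  case (Cons b u)
  have "atom ((b # u) @ w) = Qb b \<inter> preim T 1 (atom u \<inter> preim T (length u) (atom w))"
    using Cons by (simp add: atom_Cons)
  also have "\<dots> = Qb b \<inter> preim T 1 (atom u) \<inter> preim T 1 (preim T (length u) (atom w))"
    by (simp add: preim_Int Int_assoc)
  also have "preim T 1 (preim T (length u) (atom w)) = preim T (Suc (length u)) (atom w)"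
    by (rule preim_Suc[symmetric])
  finally show ?case by (simp add: atom_Cons)
qed

lemma atom_disj: "length u = length w \<Longrightarrow> u \<noteq> w \<Longrightarrow> atom u \<inter> atom w = {}"
proof -
  assume l: "length u = length w" and ne: "u \<noteq> w"
  then obtain j where j: "j < length u" "u!j \<noteq> w!j" using nth_equalityI by blast
  show ?thesis
  proof (rule ccontr)
    assume "atom u \<inter> atom w \<noteq> {}"
    then obtain x where "x \<in> atom u" "x \<in> atom w" by blast
    hence "(T^^j) x \<in> Qb (u!j)" "(T^^j) x \<in> Qb (w!j)" using j l unfolding atom_mem by auto
    thus False using Qb_disj[OF j(2)] by blast
  qed
qed

lemma atom_cover: "x \<in> S \<Longrightarrow> \<exists>w\<in>W n. x \<in> atom w"
proof -
  assume x: "x \<in> S"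
  define w where "w = map (\<lambda>j. (T^^j) x \<in> q) [0..<n]"
  have "w \<in> W n" unfolding w_def W_def by simp
  moreover have "x \<in> atom w"
    unfolding atom_mem w_def using x TnS[OF x] by (auto simp: Qb_def)
  ultimately show ?thesis by blast
qed

lemma finite_W: "finite (W n)"
proof -
  have "W n = {xs. set xs \<subseteq> UNIV \<and> length xs = n}" unfolding W_def by auto
  thus ?thesis using finite_lists_length_eq[of "UNIV :: bool set" n] by simp
qed

lemma sum_preim_atoms:
  assumes X: "X \<in> sets \<mu>" "X \<subseteq> S"
  shows "(\<Sum>u\<in>W n. measure \<mu> (preim T k (atom u) \<inter> X)) = measure \<mu> X"
proof -
  have eq: "X = (\<Union>u\<in>W n. preim T k (atom u) \<inter> X)"
  proof
    show "X \<subseteq> (\<Union>u\<in>W n. preim T k (atom u) \<inter> X)"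
    proof
      fix x assume x: "x \<in> X"
      hence xS: "x \<in> S" using X by blast
      obtain u where u: "u \<in> W n" "(T^^k) x \<in> atom u" using atom_cover[OF TnS[OF xS]] by blast
      hence "x \<in> preim T k (atom u)" using xS by (simp add: preim_def)
      thus "x \<in> (\<Union>u\<in>W n. preim T k (atom u) \<inter> X)" using u x by blast
    qed
  qed blast
  have "measure \<mu> (\<Union>u\<in>W n. preim T k (atom u) \<inter> X) = (\<Sum>u\<in>W n. measure \<mu> (preim T k (atom u) \<inter> X))"
  proof (rule M.finite_measure_finite_Union)
    show "finite (W n)" by (rule finite_W)
    show "(\<lambda>u. preim T k (atom u) \<inter> X) ` W n \<subseteq> sets \<mu>"
      using X atom_sets preim_sets by blast
    show "disjoint_family_on (\<lambda>u. preim T k (atom u) \<inter> X) (W n)"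
      unfolding disjoint_family_on_def
    proof (intro ballI impI)
      fix u v assume "u \<in> W n" "v \<in> W n" "u \<noteq> v"
      hence "atom u \<inter> atom v = {}" using atom_disj unfolding W_def by simp
      thus "preim T k (atom u) \<inter> X \<inter> (preim T k (atom v) \<inter> X) = {}" unfolding preim_def by blast
    qed
  qed
  thus ?thesis using eq by simp
qed

lemma sum_atoms: "(\<Sum>u\<in>W n. measure \<mu> (atom u)) = 1"
proof -
  have "(\<Sum>u\<in>W n. measure \<mu> (preim T 0 (atom u) \<inter> S)) = measure \<mu> S"
    using sets.top[of \<mu>] sp by (intro sum_preim_atoms) auto
  moreover have "preim T 0 (atom u) \<inter> S = atom u" for u using atom_sub by (simp add: preim_0 Int_absorb2)
  ultimately show ?thesis using M.prob_space sp by simp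
qed

lemma measure_union_atoms:
  assumes B: "B \<subseteq> W n" and Y: "Y \<in> sets \<mu>"
  shows "measure \<mu> (Y \<inter> preim T k (\<Union>w\<in>B. atom w)) = (\<Sum>w\<in>B. measure \<mu> (Y \<inter> preim T k (atom w)))"
proof -
  have fB: "finite B" using B finite_W finite_subset by blast
  have "Y \<inter> preim T k (\<Union>w\<in>B. atom w) = (\<Union>w\<in>B. Y \<inter> preim T k (atom w))"
    by (auto simp: preim_def)
  moreover have "measure \<mu> (\<Union>w\<in>B. Y \<inter> preim T k (atom w)) = (\<Sum>w\<in>B. measure \<mu> (Y \<inter> preim T k (atom w)))"
  proof (rule M.finite_measure_finite_Union)
    show "finite B" by (rule fB)
    show "(\<lambda>w. Y \<inter> preim T k (atom w)) ` B \<subseteq> sets \<mu>" using Y atom_sets preim_sets by blast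
    show "disjoint_family_on (\<lambda>w. Y \<inter> preim T k (atom w)) B"
      unfolding disjoint_family_on_def
    proof (intro ballI impI)
      fix u v assume "u \<in> B" "v \<in> B" "u \<noteq> v"
      hence "atom u \<inter> atom v = {}" using atom_disj B unfolding W_def by auto
      thus "Y \<inter> preim T k (atom u) \<inter> (Y \<inter> preim T k (atom v)) = {}" unfolding preim_def by blast
    qed
  qed
  ultimately show ?thesis by simp
qed

lemma W_Suc: "(\<Sum>v\<in>W (Suc n). f v) = (\<Sum>b\<in>UNIV. \<Sum>w\<in>W n. f (b # w))"
proof -
  have "W (Suc n) = (\<lambda>(b, w). b # w) ` (UNIV \<times> W n)"
    unfolding W_def by (auto simp: length_Suc_conv image_iff)
  moreover have inj: "inj_on (\<lambda>(b, w). b # w) (UNIV \<times> W n)" by (auto simp: inj_on_def)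
  ultimately have "(\<Sum>v\<in>W (Suc n). f v) = sum (f \<circ> (\<lambda>(b, w). b # w)) (UNIV \<times> W n)"
    using sum.reindex[OF inj, of f] by simp
  hence "(\<Sum>v\<in>W (Suc n). f v) = (\<Sum>(b, w)\<in>UNIV \<times> W n. f (b # w))"
    by (simp add: comp_def split_beta)
  thus ?thesis by (simp add: sum.cartesian_product)
qed

lemma W_append: "(\<Sum>v\<in>W (m + n). f v) = (\<Sum>u\<in>W m. \<Sum>w\<in>W n. f (u @ w))"
proof -
  have "W (m + n) = (\<lambda>(u, w). u @ w) ` (W m \<times> W n)"
  proof
    show "W (m + n) \<subseteq> (\<lambda>(u, w). u @ w) ` (W m \<times> W n)"
    proof
      fix v assume "v \<in> W (m + n)"
      hence "v = take m v @ drop m v" "take m v \<in> W m" "drop m v \<in> W n" unfolding W_def by auto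
      thus "v \<in> (\<lambda>(u, w). u @ w) ` (W m \<times> W n)" by (metis (no_types, lifting) SigmaI case_prod_conv image_eqI)
    qed
  qed (auto simp: W_def)
  moreover have inj: "inj_on (\<lambda>(u, w). u @ w) (W m \<times> W n)" by (auto simp: inj_on_def W_def)
  ultimately have "(\<Sum>v\<in>W (m + n). f v) = sum (f \<circ> (\<lambda>(u, w). u @ w)) (W m \<times> W n)"
    using sum.reindex[OF inj, of f] by simp
  hence "(\<Sum>v\<in>W (m + n). f v) = (\<Sum>(u, w)\<in>W m \<times> W n. f (u @ w))"
    by (simp add: comp_def split_beta)
  thus ?thesis by (simp add: sum.cartesian_product)
qed

end


lemma phi_nonneg: "0 \<le> x \<Longrightarrow> x \<le> 1 \<Longrightarrow> phi x \<ge> 0"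
proof (cases "x = 0")
  case False
  assume "0 \<le> x" "x \<le> 1"
  hence "x > 0" "ln x \<le> 0" using False by auto
  thus ?thesis unfolding phi_def by (simp add: mult_nonneg_nonpos)
qed simp

lemma gain_nonneg:
  fixes a b :: real assumes "a \<ge> 0" "b \<ge> 0"
  shows "a * (1 - a / (a + b)) + b * (1 - b / (a + b)) \<ge> 0"
proof (cases "a + b = 0")
  case True thus ?thesis using assms by simp
next
  case False
  hence s: "a + b > 0" using assms by simp
  have 1: "1 - a / (a + b) = b / (a + b)" "1 - b / (a + b) = a / (a + b)" using s by (simp_all add: field_simps)
  have "a * (1 - a / (a + b)) + b * (1 - b / (a + b)) = 2 * a * b / (a + b)"
    unfolding 1 by (simp add: field_simps)
  thus ?thesis using assms s by simp
qed

lemma gain_good: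
  fixes a b e :: real
  assumes "a \<ge> 0" "b \<ge> 0" "0 \<le> e" "e \<le> 1/2" "a \<le> (1 - e) * (a + b)" "b \<le> (1 - e) * (a + b)"
  shows "a * (1 - a / (a + b)) + b * (1 - b / (a + b)) \<ge> e * (a + b)"
proof (cases "a + b = 0")
  case True thus ?thesis using assms by simp
next
  case False
  define s where "s = a + b"
  hence sp: "s > 0" using assms False by simp
  have 1: "1 - a / (a + b) = b / (a + b)" "1 - b / (a + b) = a / (a + b)" using sp unfolding s_def by (simp_all add: field_simps)
  have eq: "a * (1 - a / (a + b)) + b * (1 - b / (a + b)) = 2 * a * b / s"
    unfolding 1 s_def by (simp add: field_simps)
  have "a \<ge> e * s" "b \<ge> e * s" using assms unfolding s_def by (simp_all add: algebra_simps)
  hence "(a - e * s) * (b - e * s) \<ge> 0" by simp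
  hence "a * b \<ge> e * (1 - e) * s * s" unfolding s_def by (simp add: algebra_simps power2_eq_square)
  hence "2 * a * b / s \<ge> 2 * e * (1 - e) * s" using sp by (simp add: field_simps)
  moreover have "2 * e * (1 - e) * s \<ge> e * s"
  proof -
    have "0 \<le> e * s * (1 - 2 * e)" using assms sp by (intro mult_nonneg_nonneg) auto
    thus ?thesis by (simp add: algebra_simps)
  qed
  ultimately show ?thesis using eq unfolding s_def by simp
qed

context esys begin

lemma Hn0: "Hn 0 = 0"
proof -
  have "W 0 = {[]}" unfolding W_def by auto
  thus ?thesis unfolding Hn_def using atom_Nil M.prob_space sp by simp
qed

lemma measure_le1: "measure \<mu> A \<le> 1" by (rule M.prob_le_1)

lemma Hn_nonneg: "Hn n \<ge> 0"
  unfolding Hn_def by (intro sum_nonneg phi_nonneg) (auto intro: measure_le1)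

lemma Hn_sub: "Hn (m + n) \<le> Hn m + Hn n"
proof -
  define x where "x u w = measure \<mu> (atom (u @ w))" for u w
  define a where "a u = measure \<mu> (atom u)" for u
  define b where "b w = measure \<mu> (atom w)" for w
  have xeq: "x u w = measure \<mu> (atom u \<inter> preim T m (atom w))" if "u \<in> W m" for u w
    using that unfolding x_def W_def by (simp add: atom_append)
  have xa: "x u w \<le> a u" if "u \<in> W m" for u w
    unfolding xeq[OF that] a_def using atom_sets by (intro M.finite_measure_mono) auto
  have xb: "x u w \<le> b w" if "u \<in> W m" for u w
  proof -
    have "x u w \<le> measure \<mu> (preim T m (atom w))"
      unfolding xeq[OF that] using atom_sets preim_sets by (intro M.finite_measure_mono) auto
    thus ?thesis unfolding b_def using inv atom_sets by simp
  qed
  have x0: "x u w \<ge> 0" for u w unfolding x_def by simp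
  have suma: "(\<Sum>w\<in>W n. x u w) = a u" if "u \<in> W m" for u
  proof -
    have "(\<Sum>w\<in>W n. x u w) = (\<Sum>w\<in>W n. measure \<mu> (preim T m (atom w) \<inter> atom u))"
      using xeq[OF that] by (simp add: Int_commute)
    also have "\<dots> = a u" unfolding a_def using atom_sets atom_sub by (intro sum_preim_atoms)
    finally show ?thesis .
  qed
  have sumb: "(\<Sum>u\<in>W m. x u w) = b w" for w
  proof -
    have "(\<Sum>u\<in>W m. x u w) = (\<Sum>u\<in>W m. measure \<mu> (preim T 0 (atom u) \<inter> preim T m (atom w)))"
      using xeq atom_sub by (intro sum.cong) (auto simp: preim_0)
    also have "\<dots> = measure \<mu> (preim T m (atom w))"
      using atom_sets preim_sets preim_sub by (intro sum_preim_atoms) auto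
    also have "\<dots> = b w" unfolding b_def using inv atom_sets by simp
    finally show ?thesis .
  qed
  have sa: "(\<Sum>u\<in>W m. a u) = 1" unfolding a_def by (rule sum_atoms)
  have sb: "(\<Sum>w\<in>W n. b w) = 1" unfolding b_def by (rule sum_atoms)
  have "Hn (m + n) = (\<Sum>u\<in>W m. \<Sum>w\<in>W n. phi (x u w))"
    unfolding Hn_def x_def by (rule W_append)
  also have "\<dots> \<le> (\<Sum>u\<in>W m. \<Sum>w\<in>W n. - x u w * ln (a u) - x u w * ln (b w) + a u * b w - x u w)"
    using phi_upper x0 xa xb by (intro sum_mono) auto
  also have "\<dots> = (\<Sum>u\<in>W m. \<Sum>w\<in>W n. - x u w * ln (a u)) + (\<Sum>u\<in>W m. \<Sum>w\<in>W n. - x u w * ln (b w))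
       + (\<Sum>u\<in>W m. \<Sum>w\<in>W n. a u * b w) - (\<Sum>u\<in>W m. \<Sum>w\<in>W n. x u w)"
    by (simp add: sum.distrib sum_subtractf sum_negf)
  also have "(\<Sum>u\<in>W m. \<Sum>w\<in>W n. - x u w * ln (a u)) = (\<Sum>u\<in>W m. phi (a u))"
  proof (rule sum.cong)
    fix u assume u: "u \<in> W m"
    have "(\<Sum>w\<in>W n. - x u w * ln (a u)) = - (\<Sum>w\<in>W n. x u w) * ln (a u)"
      by (simp add: sum_distrib_right sum_negf)
    thus "(\<Sum>w\<in>W n. - x u w * ln (a u)) = phi (a u)" using suma[OF u] by (simp add: phi_def)
  qed simp
  also have "(\<Sum>u\<in>W m. \<Sum>w\<in>W n. - x u w * ln (b w)) = (\<Sum>w\<in>W n. phi (b w))"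
  proof -
    have "(\<Sum>u\<in>W m. \<Sum>w\<in>W n. - x u w * ln (b w)) = (\<Sum>w\<in>W n. \<Sum>u\<in>W m. - x u w * ln (b w))"
      by (rule sum.swap)
    also have "\<dots> = (\<Sum>w\<in>W n. phi (b w))"
    proof (rule sum.cong)
      fix w
      have "(\<Sum>u\<in>W m. - x u w * ln (b w)) = - (\<Sum>u\<in>W m. x u w) * ln (b w)"
        by (simp add: sum_distrib_right sum_negf)
      thus "(\<Sum>u\<in>W m. - x u w * ln (b w)) = phi (b w)" using sumb[of w] by (simp add: phi_def)
    qed simp
    finally show ?thesis .
  qed
  also have "(\<Sum>u\<in>W m. \<Sum>w\<in>W n. a u * b w) = 1"
    using sa sb by (simp add: sum_product[symmetric])
  also have "(\<Sum>u\<in>W m. \<Sum>w\<in>W n. x u w) = 1"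
    using suma sa by simp
  finally show ?thesis unfolding Hn_def a_def b_def by simp
qed

end


context esys begin

definition mm :: "nat \<Rightarrow> bool \<Rightarrow> bool list \<Rightarrow> real" where
  "mm d b w = measure \<mu> (Qb b \<inter> preim T d (atom w))"
definition sw :: "bool list \<Rightarrow> real" where "sw w = measure \<mu> (atom w)"
definition gain :: "nat \<Rightarrow> bool list \<Rightarrow> real" where
  "gain d w = mm d True w * (1 - mm d True w / sw w) + mm d False w * (1 - mm d False w / sw w)"

lemma mm_sum: "mm d True w + mm d False w = sw w"
proof -
  let ?Y = "preim T d (atom w)"
  have Y: "?Y \<in> sets \<mu>" "?Y \<subseteq> S" using atom_sets preim_sets preim_sub by auto
  have "measure \<mu> (q \<inter> ?Y) + measure \<mu> ((S - q) \<inter> ?Y) = measure \<mu> ((q \<inter> ?Y) \<union> ((S - q) \<inter> ?Y))"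
    using Y q_sets Sq_sets by (intro M.finite_measure_Union[symmetric]) auto
  also have "(q \<inter> ?Y) \<union> ((S - q) \<inter> ?Y) = ?Y" using Y by blast
  also have "measure \<mu> ?Y = sw w" unfolding sw_def using inv atom_sets by simp
  finally show ?thesis unfolding mm_def Qb_def by simp
qed

lemma mm_nonneg: "mm d b w \<ge> 0" unfolding mm_def by simp

lemma Hn_chain:
  assumes d: "d \<ge> 1"
  shows "Hn N + (\<Sum>w\<in>W N. gain d w) \<le> Hn (N + d)"
proof -
  obtain e where de: "d = Suc e" using d by (cases d) auto
  define x where "x b u w = measure \<mu> (atom ((b # u) @ w))" for b u w
  have xeq: "x b u w = measure \<mu> (preim T 1 (atom u) \<inter> (Qb b \<inter> preim T d (atom w)))"
    if "u \<in> W e" for b u w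
  proof -
    have "atom ((b # u) @ w) = atom (b # u) \<inter> preim T d (atom w)"
      using that de unfolding W_def by (simp add: atom_append del: append_Cons)
    also have "\<dots> = preim T 1 (atom u) \<inter> (Qb b \<inter> preim T d (atom w))"
      by (auto simp: atom_Cons)
    finally show ?thesis unfolding x_def by simp
  qed
  have Xs: "Qb b \<inter> preim T d (atom w) \<in> sets \<mu>" "Qb b \<inter> preim T d (atom w) \<subseteq> S" for b w
    using Qb_sets atom_sets preim_sets Qb_sub[of b] by auto
  have sumx: "(\<Sum>u\<in>W e. x b u w) = mm d b w" for b w
  proof -
    have "(\<Sum>u\<in>W e. x b u w) = (\<Sum>u\<in>W e. measure \<mu> (preim T 1 (atom u) \<inter> (Qb b \<inter> preim T d (atom w))))"
      using xeq by (intro sum.cong) auto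
    also have "\<dots> = mm d b w" unfolding mm_def using Xs by (intro sum_preim_atoms)
    finally show ?thesis .
  qed
  have x0: "0 \<le> x b u w" for b u w unfolding x_def by simp
  have xm: "x b u w \<le> mm d b w" if "u \<in> W e" for b u w
    unfolding xeq[OF that] mm_def using Xs by (intro M.finite_measure_mono) auto
  have ms: "mm d b w \<le> sw w" for b w
    using mm_sum[of d w] mm_nonneg[of d True w] mm_nonneg[of d False w] by (cases b) auto
  have "Hn (N + d) = Hn (d + N)" by (simp add: add.commute)
  also have "\<dots> = (\<Sum>v\<in>W d. \<Sum>w\<in>W N. phi (measure \<mu> (atom (v @ w))))"
    unfolding Hn_def by (rule W_append)
  also have "\<dots> = (\<Sum>b\<in>UNIV. \<Sum>u\<in>W e. \<Sum>w\<in>W N. phi (x b u w))"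
    unfolding de x_def by (rule W_Suc)
  finally have H1: "Hn (N + d) = (\<Sum>b\<in>UNIV. \<Sum>u\<in>W e. \<Sum>w\<in>W N. phi (x b u w))" .
  define g where "g b w = - ln (sw w) + (1 - mm d b w / sw w)" for b w
  have "(\<Sum>b\<in>UNIV. \<Sum>u\<in>W e. \<Sum>w\<in>W N. x b u w * g b w) \<le> (\<Sum>b\<in>UNIV. \<Sum>u\<in>W e. \<Sum>w\<in>W N. phi (x b u w))"
  proof (intro sum_mono)
    fix b u w assume u: "u \<in> W e"
    have "phi (x b u w) \<ge> - x b u w * ln (sw w) + x b u w * (1 - mm d b w / sw w)"
      using phi_lower[OF x0 xm[OF u] ms] .
    thus "x b u w * g b w \<le> phi (x b u w)" unfolding g_def by (simp add: algebra_simps)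
  qed
  also note H1[symmetric]
  finally have H2: "(\<Sum>b\<in>UNIV. \<Sum>u\<in>W e. \<Sum>w\<in>W N. x b u w * g b w) \<le> Hn (N + d)" .
  have "(\<Sum>b\<in>UNIV. \<Sum>u\<in>W e. \<Sum>w\<in>W N. x b u w * g b w) = (\<Sum>b\<in>UNIV. \<Sum>w\<in>W N. \<Sum>u\<in>W e. x b u w * g b w)"
    by (simp add: sum.swap[of _ "W e"])
  also have "\<dots> = (\<Sum>b\<in>UNIV. \<Sum>w\<in>W N. mm d b w * g b w)"
    by (simp add: sum_distrib_right[symmetric] sumx)
  also have "\<dots> = (\<Sum>w\<in>W N. \<Sum>b\<in>UNIV. mm d b w * g b w)" by (rule sum.swap)
  also have "\<dots> = (\<Sum>w\<in>W N. phi (sw w) + gain d w)"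
  proof (rule sum.cong)
    fix w
    have "(\<Sum>b\<in>UNIV. mm d b w * g b w) = mm d True w * g True w + mm d False w * g False w"
      by (simp add: UNIV_bool)
    also have "\<dots> = - (mm d True w + mm d False w) * ln (sw w) + gain d w"
      unfolding g_def gain_def by (simp add: algebra_simps)
    also have "\<dots> = phi (sw w) + gain d w" unfolding mm_sum phi_def by simp
    finally show "(\<Sum>b\<in>UNIV. mm d b w * g b w) = phi (sw w) + gain d w" .
  qed simp
  also have "\<dots> = Hn N + (\<Sum>w\<in>W N. gain d w)" unfolding Hn_def sw_def by (simp add: sum.distrib)
  finally show ?thesis using H2 by simp
qed

end


context tsys begin

lemma nontriv: "\<exists>l q. l \<ge> 1 \<and> q \<in> F l \<and> 0 < measure \<mu> q \<and> measure \<mu> q < 1"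
proof (rule ccontr)
  assume "\<not> ?thesis"
  hence nt: "\<And>l A. l \<ge> 1 \<Longrightarrow> A \<in> F l \<Longrightarrow> \<not> (0 < measure \<mu> A \<and> measure \<mu> A < 1)"
    by blast
  have triv: "measure \<mu> A = 0 \<or> measure \<mu> A = 1" if "l \<ge> 1" "A \<in> F l" for l A
  proof -
    have "measure \<mu> A \<le> 1" by (rule M.prob_le_1)
    moreover have "measure \<mu> A \<ge> 0" by simp
    ultimately show ?thesis using nt[OF that] by linarith
  qed
  have all01: "measure \<mu> C = 0 \<or> measure \<mu> C = 1" if C: "C \<in> sets \<mu>" for C
  proof (rule indep01[OF C])
    fix l A assume l: "l \<ge> 1" and A: "A \<in> F l"
    have As: "A \<in> sets \<mu>" using A F_sets by blast
    show "measure \<mu> (A \<inter> C) = measure \<mu> A * measure \<mu> C"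
    proof (cases "measure \<mu> A = 0")
      case True
      have "measure \<mu> (A \<inter> C) \<le> measure \<mu> A" using As by (intro M.finite_measure_mono) auto
      thus ?thesis using True by (simp add: measure_nonneg antisym)
    next
      case False
      hence A1: "measure \<mu> A = 1" using triv[OF l A] by simp
      have CS: "C - A \<subseteq> S - A" using C sets_mu_iff by blast
      have SA: "S - A \<in> sets \<mu>" using sets.compl_sets[OF As] sp by simp
      have "measure \<mu> (C - A) \<le> measure \<mu> (S - A)" using M.finite_measure_mono[OF CS SA] .
      also have "measure \<mu> (S - A) = 0" using M.prob_compl[OF As] A1 sp by simp
      finally have "measure \<mu> (C - A) = 0" by (simp add: measure_nonneg antisym)
      moreover have "measure \<mu> C = measure \<mu> (A \<inter> C) + measure \<mu> (C - A)"
      proof -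
        have e: "(A \<inter> C) \<union> (C - A) = C" by blast
        have "measure \<mu> ((A \<inter> C) \<union> (C - A)) = measure \<mu> (A \<inter> C) + measure \<mu> (C - A)"
          using As C by (intro M.finite_measure_Union) auto
        thus ?thesis unfolding e .
      qed
      ultimately show ?thesis using A1 by simp
    qed
  qed
  obtain c :: real where c: "c \<ge> 1" "\<forall>A\<in>sets unit_borel. measure lborel A \<le> c * measure \<mu> A"
  proof -
    have "\<exists>c::real. c \<ge> 1 \<and> (\<forall>A\<in>sets unit_borel.
         measure \<mu> A / c \<le> measure lborel A \<and> measure lborel A \<le> c * measure \<mu> A)"
      using cls unfolding in_class_T_def by (elim conjE) assumption
    thus ?thesis using that by blast
  qed
  let ?C1 = "{0..1/2::real}" and ?C2 = "{1/2<..1::real}"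
  have C1s: "?C1 \<in> sets \<mu>" and C2s: "?C2 \<in> sets \<mu>" unfolding sets_mu_iff by auto
  have pos: "measure \<mu> C > 0" if "C \<in> sets \<mu>" "measure lborel C = 1/2" for C
  proof -
    have "1/2 \<le> c * measure \<mu> C" using c(2) that sets_eq by auto
    hence "c * measure \<mu> C > 0" by simp
    thus ?thesis using c(1) by (simp add: zero_less_mult_iff)
  qed
  have "measure \<mu> ?C1 = 1" using all01[OF C1s] pos[OF C1s] by simp
  moreover have "measure \<mu> ?C2 = 1" using all01[OF C2s] pos[OF C2s] by simp
  moreover have "measure \<mu> (?C1 \<union> ?C2) = measure \<mu> ?C1 + measure \<mu> ?C2"
    using C1s C2s by (intro M.finite_measure_Union) auto
  moreover have "measure \<mu> (?C1 \<union> ?C2) \<le> 1" by (rule M.prob_le_1)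
  ultimately show False by simp
qed

end

context esys begin

lemma atom_alt: "atom w = S \<inter> (\<Inter>j<length w. (T^^j) -` (Qb (w!j)))"
  unfolding atom_def preim_def by auto

lemma join_eq: "join_partition \<mu> T {q, S - q} n = atom ` W n - {{}}"
proof -
  have "{space \<mu> \<inter> (\<Inter>j<n. (T^^j) -` (f j)) | f. \<forall>j<n. f j \<in> {q, S - q}} = atom ` W n"
  proof
    show "{space \<mu> \<inter> (\<Inter>j<n. (T^^j) -` (f j)) | f. \<forall>j<n. f j \<in> {q, S - q}} \<subseteq> atom ` W n"
    proof
      fix x assume "x \<in> {space \<mu> \<inter> (\<Inter>j<n. (T^^j) -` (f j)) | f. \<forall>j<n. f j \<in> {q, S - q}}"
      then obtain f where f: "\<forall>j<n. f j \<in> {q, S - q}" "x = S \<inter> (\<Inter>j<n. (T^^j) -` (f j))"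
        using sp by auto
      define w where "w = map (\<lambda>j. f j = q) [0..<n]"
      have w: "w \<in> W n" unfolding w_def W_def by simp
      have "Qb (w!j) = f j" if "j < n" for j
        using f(1) that unfolding w_def Qb_def by auto
      hence "atom w = x" unfolding atom_alt f(2) using w unfolding W_def by auto
      thus "x \<in> atom ` W n" using w by blast
    qed
    show "atom ` W n \<subseteq> {space \<mu> \<inter> (\<Inter>j<n. (T^^j) -` (f j)) | f. \<forall>j<n. f j \<in> {q, S - q}}"
    proof
      fix x assume "x \<in> atom ` W n"
      then obtain w where w: "w \<in> W n" "x = atom w" by blast
      have "x = space \<mu> \<inter> (\<Inter>j<n. (T^^j) -` ((\<lambda>j. Qb (w!j)) j))"
        using w sp unfolding atom_alt W_def by simp
      moreover have "\<forall>j<n. (\<lambda>j. Qb (w!j)) j \<in> {q, S - q}" unfolding Qb_def by auto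
      ultimately show "x \<in> {space \<mu> \<inter> (\<Inter>j<n. (T^^j) -` (f j)) | f. \<forall>j<n. f j \<in> {q, S - q}}"
        by (intro CollectI exI[of _ "\<lambda>j. Qb (w!j)"] conjI)
    qed
  qed
  thus ?thesis unfolding join_partition_def by simp
qed

lemma part_entropy_eq: "part_entropy \<mu> (join_partition \<mu> T {q, S - q} n) = Hn n"
proof -
  have fin: "finite (atom ` W n)" using finite_W by simp
  have "part_entropy \<mu> (atom ` W n - {{}}) = (\<Sum>x\<in>atom ` W n - {{}}. phi (measure \<mu> x))"
    unfolding part_entropy_def phi_def by simp
  also have "\<dots> = (\<Sum>x\<in>atom ` W n. phi (measure \<mu> x))"
    using fin by (simp add: sum_diff1)
  also have "\<dots> = (\<Sum>w\<in>W n. phi (measure \<mu> (atom w)))"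
  proof (subst sum.reindex_nontrivial)
    show "finite (W n)" by (rule finite_W)
    fix u v assume "u \<in> W n" "v \<in> W n" "u \<noteq> v" "atom u = atom v"
    hence "atom u = {}" using atom_disj unfolding W_def by fastforce
    thus "phi (measure \<mu> (atom u)) = 0" by simp
  qed (simp add: comp_def)
  finally show ?thesis unfolding join_eq Hn_def .
qed

lemma fmp: "finite_meas_partition \<mu> {q, S - q}"
  unfolding finite_meas_partition_def disjoint_def using q_sets Sq_sets q_sub sp by auto

lemma bad_bound:
  assumes mix: "\<And>B. B \<in> sets \<mu> \<Longrightarrow> measure \<mu> (Qb b \<inter> preim T d B) \<le> measure \<mu> (Qb b) * measure \<mu> B + a"
    and nu: "measure \<mu> (Qb b) \<le> \<nu>"
  shows "(1 - \<epsilon> - \<nu>) * (\<Sum>w\<in>{w\<in>W N. mm d b w > (1 - \<epsilon>) * sw w}. sw w) \<le> a"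
proof -
  define Bd where "Bd = {w\<in>W N. mm d b w > (1 - \<epsilon>) * sw w}"
  have BdW: "Bd \<subseteq> W N" unfolding Bd_def by auto
  have fB: "finite Bd" using BdW finite_W finite_subset by blast
  define Y where "Y = (\<Union>w\<in>Bd. atom w)"
  have Ys: "Y \<in> sets \<mu>" unfolding Y_def using fB atom_sets by (intro sets.finite_UN) auto
  have "measure \<mu> (S \<inter> preim T 0 Y) = (\<Sum>w\<in>Bd. measure \<mu> (S \<inter> preim T 0 (atom w)))"
    unfolding Y_def using BdW sets.top[of \<mu>] sp by (intro measure_union_atoms) auto
  moreover have "S \<inter> preim T 0 Z = Z" if "Z \<subseteq> S" for Z using that by (auto simp: preim_def)
  moreover have "Y \<subseteq> S" unfolding Y_def using atom_sub by blast
  ultimately have mY: "measure \<mu> Y = (\<Sum>w\<in>Bd. sw w)" unfolding sw_def using atom_sub by simp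
  have mQY: "measure \<mu> (Qb b \<inter> preim T d Y) = (\<Sum>w\<in>Bd. mm d b w)"
    unfolding Y_def mm_def using BdW Qb_sets by (intro measure_union_atoms) auto
  have "(1 - \<epsilon>) * (\<Sum>w\<in>Bd. sw w) = (\<Sum>w\<in>Bd. (1 - \<epsilon>) * sw w)" by (simp add: sum_distrib_left)
  also have "\<dots> \<le> (\<Sum>w\<in>Bd. mm d b w)" unfolding Bd_def by (intro sum_mono) auto
  also have "\<dots> \<le> measure \<mu> (Qb b) * measure \<mu> Y + a" using mix[OF Ys] mQY by simp
  also have "\<dots> \<le> \<nu> * measure \<mu> Y + a" using nu by (intro add_right_mono mult_right_mono) auto
  finally show ?thesis using mY unfolding Bd_def by (simp add: algebra_simps)
qed

end


context esys begin

lemma entropy_pos: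
  assumes l0: "l0 \<ge> 1" and qF: "q \<in> F l0" and qm: "0 < measure \<mu> q" "measure \<mu> q < 1"
    and alim: "\<alpha> \<longlonglongrightarrow> 0"
    and mix: "\<And>l n A B. l \<ge> 1 \<Longrightarrow> A \<in> F l \<Longrightarrow> B \<in> sets \<mu> \<Longrightarrow>
       \<bar>measure \<mu> (A \<inter> preim T (n + l) B) - measure \<mu> A * measure \<mu> B\<bar> \<le> \<alpha> n"
  shows "entropy_wrt \<mu> T {q, S - q} > 0"
proof -
  define \<nu> where "\<nu> = max (measure \<mu> q) (1 - measure \<mu> q)"
  have nu1: "\<nu> < 1" using qm unfolding \<nu>_def by auto
  have nu2: "\<nu> \<ge> 1/2"
    unfolding \<nu>_def by (cases "measure \<mu> q \<le> 1 - measure \<mu> q") (simp_all add: max_def)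
  define \<epsilon> where "\<epsilon> = (1 - \<nu>) / 2"
  have ep: "\<epsilon> > 0" "\<epsilon> \<le> 1/4" using nu1 nu2 unfolding \<epsilon>_def by auto
  obtain n0 where n0: "\<alpha> n0 \<le> \<epsilon> * \<epsilon> / 4"
  proof -
    have "\<epsilon> * \<epsilon> / 4 > 0" using ep by simp
    from LIMSEQ_D[OF alim this] obtain no where "\<forall>n\<ge>no. norm (\<alpha> n - 0) < \<epsilon> * \<epsilon> / 4" by blast
    hence "\<alpha> no \<le> \<epsilon> * \<epsilon> / 4" by auto
    thus ?thesis using that by blast
  qed
  define d where "d = n0 + l0"
  have d1: "d \<ge> 1" using l0 unfolding d_def by simp
  have QF: "Qb b \<in> F l0" for b
    using qF unfolding Qb_def F_def by (auto intro: sigma_sets.Compl)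
  have Qnu: "measure \<mu> (Qb b) \<le> \<nu>" for b
  proof (cases b)
    case True thus ?thesis unfolding Qb_def \<nu>_def by simp
  next
    case False
    have "measure \<mu> (S - q) = 1 - measure \<mu> q" using M.prob_compl[OF q_sets] sp by simp
    thus ?thesis using False unfolding Qb_def \<nu>_def by simp
  qed
  have mixb: "measure \<mu> (Qb b \<inter> preim T d B) \<le> measure \<mu> (Qb b) * measure \<mu> B + \<alpha> n0"
    if "B \<in> sets \<mu>" for b B
    using mix[of l0 "Qb b" B n0]  l0 QF that unfolding d_def by (simp add: abs_le_iff)
  define Bd where "Bd b N = {w\<in>W N. mm d b w > (1 - \<epsilon>) * sw w}" for b N
  have eps_eq: "1 - \<epsilon> - \<nu> = \<epsilon>" unfolding \<epsilon>_def by (simp add: field_simps)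
  have bad: "(\<Sum>w\<in>Bd b N. sw w) \<le> \<epsilon> / 4" for b N
  proof -
    have "(1 - \<epsilon> - \<nu>) * (\<Sum>w\<in>Bd b N. sw w) \<le> \<alpha> n0"
      unfolding Bd_def by (rule bad_bound[OF mixb Qnu])
    hence "\<epsilon> * (\<Sum>w\<in>Bd b N. sw w) \<le> \<epsilon> * (\<epsilon> / 4)" using n0 eps_eq by simp
    thus ?thesis using ep by simp
  qed
  have sw0: "sw w \<ge> 0" for w unfolding sw_def by simp
  have gainS: "\<epsilon> / 2 \<le> (\<Sum>w\<in>W N. gain d w)" for N
  proof -
    define B where "B = Bd True N \<union> Bd False N"
    have BW: "B \<subseteq> W N" unfolding B_def Bd_def by auto
    have fW: "finite (W N)" by (rule finite_W)
    have gform: "gain d w = mm d True w * (1 - mm d True w / (mm d True w + mm d False w))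
        + mm d False w * (1 - mm d False w / (mm d True w + mm d False w))" for w
      unfolding gain_def mm_sum ..
    have g0: "gain d w \<ge> 0" for w unfolding gform by (intro gain_nonneg mm_nonneg)
    have gg: "gain d w \<ge> \<epsilon> * sw w" if "w \<in> W N - B" for w
    proof -
      have "\<not> mm d True w > (1 - \<epsilon>) * sw w" "\<not> mm d False w > (1 - \<epsilon>) * sw w"
        using that unfolding B_def Bd_def by auto
      hence "mm d True w \<le> (1 - \<epsilon>) * (mm d True w + mm d False w)"
        "mm d False w \<le> (1 - \<epsilon>) * (mm d True w + mm d False w)" unfolding mm_sum by auto
      hence "gain d w \<ge> \<epsilon> * (mm d True w + mm d False w)"
        unfolding gform using ep by (intro gain_good mm_nonneg) auto
      thus ?thesis unfolding mm_sum .
    qed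
    have "(\<Sum>w\<in>W N - B. \<epsilon> * sw w) \<le> (\<Sum>w\<in>W N - B. gain d w)" using gg by (intro sum_mono) auto
    also have "\<dots> \<le> (\<Sum>w\<in>W N. gain d w)" using fW g0 by (intro sum_mono2) auto
    finally have 1: "(\<Sum>w\<in>W N - B. \<epsilon> * sw w) \<le> (\<Sum>w\<in>W N. gain d w)" .
    have "(\<Sum>w\<in>W N - B. \<epsilon> * sw w) = \<epsilon> * ((\<Sum>w\<in>W N. sw w) - (\<Sum>w\<in>B. sw w))"
      using fW BW by (simp add: sum_distrib_left[symmetric] sum_diff)
    also have "(\<Sum>w\<in>W N. sw w) = 1" unfolding sw_def by (rule sum_atoms)
    finally have 2: "(\<Sum>w\<in>W N - B. \<epsilon> * sw w) = \<epsilon> * (1 - (\<Sum>w\<in>B. sw w))" .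
    have fB: "finite (Bd b N)" for b unfolding Bd_def using fW by simp
    have "(\<Sum>w\<in>B. sw w) = (\<Sum>w\<in>Bd True N. sw w) + (\<Sum>w\<in>Bd False N. sw w) - (\<Sum>w\<in>Bd True N \<inter> Bd False N. sw w)"
      unfolding B_def by (rule sum_Un[OF fB fB])
    moreover have "(\<Sum>w\<in>Bd True N \<inter> Bd False N. sw w) \<ge> 0" using sw0 by (intro sum_nonneg) auto
    ultimately have "(\<Sum>w\<in>B. sw w) \<le> \<epsilon> / 2" using bad[of True N] bad[of False N] by simp
    hence "\<epsilon> * (1 - (\<Sum>w\<in>B. sw w)) \<ge> \<epsilon> * (1 - \<epsilon> / 2)" using ep by (intro mult_left_mono) auto
    moreover have "\<epsilon> * (1 - \<epsilon> / 2) \<ge> \<epsilon> / 2"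
    proof -
      have ee: "\<epsilon> * \<epsilon> \<le> \<epsilon> * 1" using ep by (intro mult_left_mono) auto
      have "\<epsilon> * (1 - \<epsilon> / 2) = \<epsilon> - (\<epsilon> * \<epsilon>) / 2" by (simp add: algebra_simps)
      thus ?thesis using ee by linarith
    qed
    ultimately show ?thesis using 1 2 by simp
  qed
  have growth: "Hn N + \<epsilon> / 2 \<le> Hn (N + d)" for N
    using Hn_chain[OF d1, of N] gainS[of N] by simp
  have lin: "real k * (\<epsilon> / 2) \<le> Hn (k * d)" for k
  proof (induction k)
    case 0 thus ?case using Hn0 by simp
  next
    case (Suc k)
    have "real (Suc k) * (\<epsilon> / 2) = real k * (\<epsilon> / 2) + \<epsilon> / 2" by (simp add: algebra_simps)
    also have "\<dots> \<le> Hn (k * d) + \<epsilon> / 2" using Suc by simp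
    also have "\<dots> \<le> Hn (k * d + d)" by (rule growth)
    finally show ?case by (simp add: add.commute)
  qed
  define a where "a n = Hn (Suc n) / real (Suc n)" for n
  have conv: "convergent a" unfolding a_def
    by (rule fekete) (auto intro: Hn_sub Hn_nonneg Hn0)
  then obtain L where L: "a \<longlonglongrightarrow> L" unfolding convergent_def by blast
  define r where "r k = Suc k * d - 1" for k
  have rS: "Suc (r k) = Suc k * d" for k unfolding r_def using d1 by simp
  have smr: "strict_mono r" unfolding strict_mono_Suc_iff
  proof
    fix k
    have "Suc (r k) < Suc (r (Suc k))" unfolding rS using d1 by simp
    thus "r k < r (Suc k)" by simp
  qed
  have sub: "(a \<circ> r) \<longlonglongrightarrow> L" by (rule LIMSEQ_subseq_LIMSEQ[OF L smr])
  have low: "\<epsilon> / (2 * real d) \<le> (a \<circ> r) k" for k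
  proof -
    have e1: "(a \<circ> r) k = Hn (Suc k * d) / real (Suc k * d)"
      unfolding a_def comp_def rS by simp
    have "real (Suc k) * (\<epsilon> / 2) / real (Suc k * d) \<le> Hn (Suc k * d) / real (Suc k * d)"
      by (rule divide_right_mono[OF lin]) simp
    hence "(a \<circ> r) k \<ge> real (Suc k) * (\<epsilon> / 2) / real (Suc k * d)" unfolding e1 .
    also have "real (Suc k) * (\<epsilon> / 2) / real (Suc k * d) = \<epsilon> / (2 * real d)"
    proof -
      have "real (Suc k) * (\<epsilon> / 2) / real (Suc k * d) = (real (Suc k) * (\<epsilon> / 2)) / (real (Suc k) * real d)"
        by (simp only: of_nat_mult)
      also have "\<dots> = (\<epsilon> / 2) / real d" by (rule mult_divide_mult_cancel_left) simp
      finally show ?thesis by simp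
    qed
    finally show ?thesis .
  qed
  have "\<epsilon> / (2 * real d) \<le> L" using LIMSEQ_le_const[OF sub] low by blast
  moreover have "\<epsilon> / (2 * real d) > 0" using ep d1 by simp
  ultimately have Lpos: "L > 0" by simp
  have "entropy_wrt \<mu> T {q, S - q} = lim a"
    unfolding entropy_wrt_def a_def part_entropy_eq ..
  also have "lim a = L" using L by (rule limI)
  finally show ?thesis using Lpos by simp
qed

end

theorem theorem3p6:
  fixes T :: "real \<Rightarrow> real" and \<mu> :: "real measure" and P :: "real set set"
  assumes "in_class_T T \<mu> P"
    and "alpha_mixing T \<mu> P"
  shows "exact T \<mu> \<and> ks_entropy \<mu> T > 0"
proof -
  interpret tsys T \<mu> P by unfold_locales (rule assms(1))
  obtain \<alpha> :: "nat \<Rightarrow> real" where a0: "\<And>n. \<alpha> n \<ge> 0" and alim: "\<alpha> \<longlonglongrightarrow> 0"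
    and am: "\<forall>l::nat. l \<ge> 1 \<longrightarrow> (\<forall>n::nat. \<forall>A\<in>sigma_sets {0..1} (refine T P l). \<forall>B\<in>sets \<mu>.
           \<bar>measure \<mu> (A \<inter> preim T (n + l) B) - measure \<mu> A * measure \<mu> B\<bar> \<le> \<alpha> n)"
    using assms(2) unfolding alpha_mixing_def by blast
  have mix: "\<bar>measure \<mu> (A \<inter> preim T (n + l) B) - measure \<mu> A * measure \<mu> B\<bar> \<le> \<alpha> n"
    if "l \<ge> 1" "A \<in> F l" "B \<in> sets \<mu>" for l n A B
    using am that unfolding F_def by blast
  have ex: "exact T \<mu>" by (rule exact_of_mix[OF a0 alim mix])
  obtain l0 q where lq: "l0 \<ge> 1" "q \<in> F l0" "0 < measure \<mu> q" "measure \<mu> q < 1"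
    using nontriv by blast
  have qs: "q \<in> sets \<mu>" using lq(2) F_sets by blast
  interpret E: esys T \<mu> P q by unfold_locales (rule assms(1), rule qs)
  have pos: "entropy_wrt \<mu> T {q, {0..1} - q} > 0"
    by (rule E.entropy_pos[OF lq alim mix])
  have "ereal (entropy_wrt \<mu> T {q, {0..1} - q}) \<le> ks_entropy \<mu> T"
    unfolding ks_entropy_def using E.fmp by (intro SUP_upper) auto
  moreover have "0 < ereal (entropy_wrt \<mu> T {q, {0..1} - q})" using pos by simp
  ultimately have "ks_entropy \<mu> T > 0" by (rule order.strict_trans2[rotated])
  thus ?thesis using ex by simp
qed


end
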